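(* (i) Let $X$ be a separable real Banach space with property (au), and let $(x_n)_{n\ge1}$ be a weakly null sequence in $X$ which does not converge to $0$ in norm. Then for every $\delta>0$ there is a subsequence $(y_n)_{n\ge1}$ of $(x_n)$ which is a $(1+\delta)$-unconditional basic sequence, i.e. $\|\sum_{j=1}^n\epsilon_ja_jy_j\|\le(1+\delta)\|\sum_{j=1}^na_jy_j\|$ for all $n$, all scalars $a_j$ and all signs $\epsilon_j=\pm1$. (ii) Let $X$ be a separable real Banach space with property (au$^*$), and let $(x_n^* )_{n\ge1}$ be a weak$^*$-null sequence in $X^*$ which does not converge to $0$ in norm. Then for every $\delta>0$ there is a subsequence $(y_n^* )$ of $(x_n^* )$ which is a $(1+\delta)$-unconditional basic sequence.
   Context: All Banach spaces are real. A separable Banach space $X$ has property (au) if for every $x\in X$ and $\delta>0$ there is a closed subspace $W\subseteq X$ of finite codimension such that $\|x-w\|\le(1+\delta)\|x+w\|$ for all $w\in W$. A separable Banach space $X$ has property (au$^*$) if $\lim_{n\to\infty}(\|x^*+x_n^*\|-\|x^*-x_n^*\|)=0$ whenever $x^*\in X^*$ and $(x_n^* )_{n\ge1}$ is a weak$^*$-null sequence in $X^*$. *)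

theory Defs
  imports "HOL-Analysis.Analysis"
begin

text \<open>Real Banach spaces are modelled by the type class banach; the dual X* is the type
  of bounded linear functionals (blinfun to real) with the operator norm.\<close>

definition separable_type :: "'a::metric_space itself \<Rightarrow> bool" where
  "separable_type _ \<longleftrightarrow> (\<exists>D::'a set. countable D \<and> closure D = UNIV)"

definition finite_codim :: "'a::real_vector set \<Rightarrow> bool" where
  "finite_codim W \<longleftrightarrow> (\<exists>F. finite F \<and> span (W \<union> F) = UNIV)"

definition property_au :: "'a::real_normed_vector itself \<Rightarrow> bool" where
  "property_au _ \<longleftrightarrow>
     (\<forall>(x::'a) \<delta>. \<delta> > 0 \<longrightarrow>
        (\<exists>W. subspace W \<and> closed W \<and> finite_codim W \<and>
             (\<forall>w\<in>W. norm (x - w) \<le> (1 + \<delta>) * norm (x + w))))"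

definition weak_star_null :: "(nat \<Rightarrow> ('a::real_normed_vector \<Rightarrow>\<^sub>L real)) \<Rightarrow> bool" where
  "weak_star_null f \<longleftrightarrow> (\<forall>x. (\<lambda>n. blinfun_apply (f n) x) \<longlonglongrightarrow> 0)"

definition weakly_null :: "(nat \<Rightarrow> 'a::real_normed_vector) \<Rightarrow> bool" where
  "weakly_null x \<longleftrightarrow> (\<forall>f::'a \<Rightarrow>\<^sub>L real. (\<lambda>n. blinfun_apply f (x n)) \<longlonglongrightarrow> 0)"

definition property_au_star :: "'a::real_normed_vector itself \<Rightarrow> bool" where
  "property_au_star _ \<longleftrightarrow>
     (\<forall>(g::'a \<Rightarrow>\<^sub>L real) f. weak_star_null f \<longrightarrow>
        (\<lambda>n. norm (g + f n) - norm (g - f n)) \<longlonglongrightarrow> 0)"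

text \<open>C-unconditional basic sequence: nonzero terms and the unconditional estimate
  (which together imply being a basic sequence).\<close>
definition unconditional_basic :: "real \<Rightarrow> (nat \<Rightarrow> 'a::real_normed_vector) \<Rightarrow> bool" where
  "unconditional_basic C y \<longleftrightarrow> (\<forall>n. y n \<noteq> 0) \<and>
     (\<forall>n (a::nat \<Rightarrow> real) (\<epsilon>::nat \<Rightarrow> real). (\<forall>j. \<epsilon> j \<in> {-1, 1}) \<longrightarrow>
        norm (\<Sum>j<n. (\<epsilon> j * a j) *\<^sub>R y j) \<le> C * norm (\<Sum>j<n. a j *\<^sub>R y j))"

end

theory Submission
  imports Defs
begin

definition sn :: "('v::real_normed_vector \<Rightarrow> real) \<Rightarrow> bool" where
  "sn p \<longleftrightarrow> (\<forall>u. 0 \<le> p u) \<and> (\<forall>u v. p (u + v) \<le> p u + p v) \<and> (\<forall>t u. p (t *\<^sub>R u) \<le> \<bar>t\<bar> * p u)"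

lemma sn_sum:
  assumes "finite T" "\<And>t. t \<in> T \<Longrightarrow> sn (q t)"
  shows "sn (\<lambda>h. \<Sum>t\<in>T. q t h)"
proof -
  have "0 \<le> (\<Sum>t\<in>T. q t u)" for u using assms by (auto simp: sn_def intro: sum_nonneg)
  moreover have "(\<Sum>t\<in>T. q t (u+v)) \<le> (\<Sum>t\<in>T. q t u) + (\<Sum>t\<in>T. q t v)" for u v
    unfolding sum.distrib[symmetric] using assms by (auto simp: sn_def intro!: sum_mono)
  moreover have "(\<Sum>t\<in>T. q t (c *\<^sub>R u)) \<le> \<bar>c\<bar> * (\<Sum>t\<in>T. q t u)" for c u
    unfolding sum_distrib_left using assms by (auto simp: sn_def intro!: sum_mono)
  ultimately show ?thesis by (simp add: sn_def)
qed

lemma sn_nonneg: "sn p \<Longrightarrow> 0 \<le> p u" by (simp add: sn_def)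

lemma sn_scale: "sn p \<Longrightarrow> p (t *\<^sub>R u) \<le> \<bar>t\<bar> * p u" by (simp add: sn_def)

lemma sn_combo:
  assumes "sn p" "finite A"
  shows "p (\<Sum>i\<in>A. b i *\<^sub>R y i) \<le> (\<Sum>i\<in>A. \<bar>b i\<bar> * p (y i))"
  using assms(2)
proof (induction A rule: finite_induct)
  case empty
  have "p 0 = p (0 *\<^sub>R 0)" by simp
  also have "\<dots> \<le> 0" using sn_scale[OF assms(1), of 0 0] by simp
  finally show ?case by simp
next
  case (insert x F)
  have "p (\<Sum>i\<in>insert x F. b i *\<^sub>R y i) = p (b x *\<^sub>R y x + (\<Sum>i\<in>F. b i *\<^sub>R y i))"
    using insert by simp
  also have "\<dots> \<le> p (b x *\<^sub>R y x) + p (\<Sum>i\<in>F. b i *\<^sub>R y i)"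
    using assms(1) by (simp add: sn_def)
  also have "\<dots> \<le> \<bar>b x\<bar> * p (y x) + (\<Sum>i\<in>F. \<bar>b i\<bar> * p (y i))"
    using insert sn_scale[OF assms(1)] by (meson add_mono)
  finally show ?case using insert by simp
qed

definition HYP :: "(nat \<Rightarrow> 'v::real_normed_vector) \<Rightarrow> bool" where
  "HYP z \<longleftrightarrow> (\<forall>\<theta>>0. \<forall>M. \<forall>g. norm g = 1 \<longrightarrow> (\<exists>p. sn p \<and> (\<lambda>m. p (z m)) \<longlonglongrightarrow> 0 \<and>
      (\<forall>h. norm h \<le> M \<longrightarrow> p h \<le> 1 \<longrightarrow>
        (\<exists>h0. norm (h - h0) \<le> \<theta> \<and> norm (g - h0) \<le> (1 + \<theta>) * norm (g + h0)))))"

lemma numeric_G: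
  fixes g t h h0 :: "'v::real_normed_vector"
  assumes th: "0 < \<theta>" "\<theta> \<le> 1" and nt: "norm t = 1"
    and gt: "norm (g - t) \<le> \<theta>/24" and hh: "norm (h - h0) \<le> \<theta>/24"
    and ineq: "norm (t - h0) \<le> (1 + \<theta>/24) * norm (t + h0)"
  shows "norm (g - h) \<le> (1 + \<theta>) * norm (g + h)"
proof -
  define a where "a = norm (t + h0)"
  define b where "b = norm (t - h0)"
  have a0: "0 \<le> a" by (simp add: a_def)
  have e2: "2 *\<^sub>R t = (t + h0) + (t - h0)" by (simp add: scaleR_2)
  have "norm (2 *\<^sub>R t) \<le> a + b" unfolding a_def b_def e2 by (rule norm_triangle_ineq)
  hence ab: "2 \<le> a + b" using nt by simp
  have b1: "b \<le> (1 + \<theta>/24) * a" using ineq by (simp add: a_def b_def)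
  have "(\<theta>/24) * a \<le> 1 * a" using th a0 by (intro mult_right_mono) auto
  hence a23: "a \<ge> 2/3" using ab b1 by (simp add: algebra_simps)
  have A: "norm (g + h) \<ge> a - \<theta>/12"
  proof -
    have "t + h0 = (g + h) - (g - t) - (h - h0)" by (simp add: algebra_simps)
    hence "a = norm ((g + h) - (g - t) - (h - h0))" unfolding a_def by simp
    hence "a \<le> norm (g + h) + norm (g - t) + norm (h - h0)"
      using norm_triangle_ineq4[of "g+h" "g-t"] norm_triangle_ineq4[of "(g+h)-(g-t)" "h-h0"] by linarith
    thus ?thesis using gt hh by simp
  qed
  have Bv: "norm (g - h) \<le> b + \<theta>/12"
  proof -
    have "g - h = (t - h0) + (g - t) - (h - h0)" by (simp add: algebra_simps)
    hence "norm (g - h) = norm (t - h0 + (g - t) - (h - h0))" by simp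
    hence "norm (g - h) \<le> norm (t - h0) + norm (g - t) + norm (h - h0)"
      using norm_triangle_ineq[of "t-h0" "g-t"] norm_triangle_ineq4[of "(t-h0)+(g-t)" "h-h0"] by linarith
    thus ?thesis using gt hh by (simp add: b_def)
  qed
  have k1: "\<theta> * a \<ge> \<theta> * (2/3)" using a23 th by (intro mult_left_mono) auto
  have k2: "(1+\<theta>) * norm (g + h) \<ge> (1+\<theta>) * (a - \<theta>/12)" using A th by (intro mult_left_mono) auto
  have tt: "\<theta> * \<theta> \<le> \<theta> * 1" using th by (intro mult_left_mono) auto
  have e1: "(1+\<theta>) * (a - \<theta>/12) = a + \<theta> * a - (\<theta> + \<theta> * \<theta>)/12" by (simp add: algebra_simps)
  have e2: "(1 + \<theta>/24) * a = a + (\<theta> * a)/24" by (simp add: algebra_simps)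
  have e3: "\<theta> * (2/3) = 2*\<theta>/3" "\<theta> * 1 = \<theta>" by simp_all
  show ?thesis using k1 k2 tt Bv b1 th unfolding e1 e2 e3 by argo
qed

lemma guarantee:
  fixes z :: "nat \<Rightarrow> 'v::real_normed_vector"
  assumes H: "HYP z" and K: "compact K" "\<And>g. g \<in> K \<Longrightarrow> norm g = 1"
    and th: "0 < \<theta>" "\<theta> \<le> 1"
  shows "\<exists>P. sn P \<and> (\<lambda>m. P (z m)) \<longlonglongrightarrow> 0 \<and>
     (\<forall>g\<in>K. \<forall>h. norm h \<le> M \<longrightarrow> P h \<le> 1 \<longrightarrow> norm (g - h) \<le> (1 + \<theta>) * norm (g + h))"
proof -
  define \<tau> where "\<tau> = \<theta>/24"
  have tau: "\<tau> > 0" using th by (simp add: \<tau>_def)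
  have "\<forall>g. \<exists>p. norm g = 1 \<longrightarrow> (sn p \<and> (\<lambda>m. p (z m)) \<longlonglongrightarrow> 0 \<and>
      (\<forall>h. norm h \<le> M \<longrightarrow> p h \<le> 1 \<longrightarrow>
        (\<exists>h0. norm (h - h0) \<le> \<tau> \<and> norm (g - h0) \<le> (1 + \<tau>) * norm (g + h0))))"
    using H tau unfolding HYP_def by blast
  then obtain pf where pf: "\<And>g. norm g = 1 \<Longrightarrow> sn (pf g) \<and> (\<lambda>m. pf g (z m)) \<longlonglongrightarrow> 0 \<and>
      (\<forall>h. norm h \<le> M \<longrightarrow> pf g h \<le> 1 \<longrightarrow>
        (\<exists>h0. norm (h - h0) \<le> \<tau> \<and> norm (g - h0) \<le> (1 + \<tau>) * norm (g + h0)))"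
    by metis
  have "K \<subseteq> (\<Union>t\<in>K. ball t \<tau>)" using tau by auto
  then obtain T where T: "T \<subseteq> K" "finite T" "K \<subseteq> (\<Union>t\<in>T. ball t \<tau>)"
    using compactE_image[OF K(1), of K "\<lambda>t. ball t \<tau>"] by auto
  define P where "P = (\<lambda>h. \<Sum>t\<in>T. pf t h)"
  have snP: "sn P" unfolding P_def
    by (rule sn_sum) (use T K pf in auto)
  have limP: "(\<lambda>m. P (z m)) \<longlonglongrightarrow> 0" unfolding P_def
    by (rule tendsto_null_sum) (use T K pf in auto)
  have main: "norm (g - h) \<le> (1 + \<theta>) * norm (g + h)"
    if g: "g \<in> K" and h: "norm h \<le> M" "P h \<le> 1" for g h
  proof -
    obtain t where t: "t \<in> T" "dist t g < \<tau>" using T g by auto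
    have nt: "norm t = 1" using t T K by auto
    have "pf t h \<le> P h" unfolding P_def
    proof (rule member_le_sum)
      fix x assume "x \<in> T - {t}"
      hence "norm x = 1" using T K by auto
      thus "0 \<le> pf x h" using pf sn_nonneg by blast
    qed (use t T in auto)
    hence "pf t h \<le> 1" using h by simp
    then obtain h0 where h0: "norm (h - h0) \<le> \<tau>" "norm (t - h0) \<le> (1 + \<tau>) * norm (t + h0)"
      using pf[OF nt] h by blast
    have "norm (g - t) \<le> \<theta>/24" using t by (simp add: dist_norm norm_minus_commute \<tau>_def)
    thus ?thesis using numeric_G[OF th nt _ _ ] h0 by (simp add: \<tau>_def)
  qed
  show ?thesis using snP limP main by blast
qed

definition sp :: "(nat \<Rightarrow> 'v::real_normed_vector) \<Rightarrow> (nat \<Rightarrow> real) \<Rightarrow> nat \<Rightarrow> 'v" where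
  "sp y b k = (\<Sum>i<k. b i *\<^sub>R y i)"

definition tl_sum :: "(nat \<Rightarrow> 'v::real_normed_vector) \<Rightarrow> (nat \<Rightarrow> real) \<Rightarrow> nat \<Rightarrow> nat \<Rightarrow> 'v" where
  "tl_sum y b k n = (\<Sum>i\<in>{k..<n}. b i *\<^sub>R y i)"

definition Sx :: "(nat \<Rightarrow> 'v::real_normed_vector) \<Rightarrow> (nat \<Rightarrow> real) \<Rightarrow> nat \<Rightarrow> nat \<Rightarrow> (nat \<Rightarrow> real) \<Rightarrow> bool" where
  "Sx y \<theta> k n b \<longleftrightarrow> norm (sp y b k - tl_sum y b k n) \<le> (1 + \<theta> k) * norm (sp y b n)"

definition Kset :: "(nat \<Rightarrow> 'v::real_normed_vector) \<Rightarrow> real \<Rightarrow> nat \<Rightarrow> 'v set" where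
  "Kset y c k = {(\<Sum>i<k. a i *\<^sub>R y i) | a. \<forall>i<k. \<bar>a i\<bar> \<le> 4/c} \<inter> {v. norm v = 1}"

lemma sp_split: "k \<le> n \<Longrightarrow> sp y b n = sp y b k + tl_sum y b k n"
proof -
  assume "k \<le> n"
  hence "{..<n} = {..<k} \<union> {k..<n}" by auto
  thus ?thesis unfolding sp_def tl_sum_def by (simp add: sum.union_disjoint[symmetric] ivl_disj_int_one(2))
qed

lemma sp_Suc: "sp y b (Suc i) = sp y b i + b i *\<^sub>R y i"
  by (simp add: sp_def)

lemma geo_le1: "(\<Sum>i<n. (1/2::real)^Suc i) \<le> 1"
proof -
  have "(\<Sum>i<n. (1/2::real)^Suc i) = 1 - (1/2)^n" by (induction n) (auto simp: field_simps)
  thus ?thesis by simp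
qed

lemma geo_le1': "(\<Sum>i\<in>{k..<n}. (1/2::real)^Suc i) \<le> 1"
proof -
  have "(\<Sum>i\<in>{k..<n}. (1/2::real)^Suc i) \<le> (\<Sum>i<n. (1/2::real)^Suc i)"
    by (rule sum_mono2) auto
  thus ?thesis using geo_le1[of n] by linarith
qed

lemma PB:
  assumes "Sx y \<theta> k n b" "\<theta> k \<le> 1" "k \<le> n"
  shows "norm (sp y b k) \<le> 2 * norm (sp y b n)"
proof -
  define g where "g = sp y b k"
  define h where "h = tl_sum y b k n"
  have v: "sp y b n = g + h" using sp_split[OF assms(3)] by (simp add: g_def h_def)
  have s: "norm (g - h) \<le> (1 + \<theta> k) * norm (g + h)" using assms(1) v by (simp add: Sx_def g_def h_def)
  have "2 *\<^sub>R g = (g + h) + (g - h)" by (simp add: scaleR_2)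
  hence "norm (2 *\<^sub>R g) \<le> norm (g + h) + norm (g - h)" by (metis norm_triangle_ineq)
  moreover have "(1 + \<theta> k) * norm (g + h) \<le> 2 * norm (g + h)" using assms(2) by (intro mult_right_mono) auto
  ultimately have "norm g \<le> 2 * norm (g + h)" using s norm_ge_zero[of "g+h"] by (simp only: norm_scaleR)
  thus ?thesis using v by (simp add: g_def)
qed

lemma coef:
  assumes "norm (sp y b i) \<le> 2 * N" "norm (sp y b (Suc i)) \<le> 2 * N" "c \<le> norm (y i)"
  shows "\<bar>b i\<bar> * c \<le> 4 * N"
proof -
  have "b i *\<^sub>R y i = sp y b (Suc i) - sp y b i" by (simp add: sp_Suc)
  hence "norm (b i *\<^sub>R y i) \<le> norm (sp y b (Suc i)) + norm (sp y b i)"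
    by (metis norm_triangle_ineq4)
  hence "\<bar>b i\<bar> * norm (y i) \<le> 4 * N" using assms by simp
  moreover have "\<bar>b i\<bar> * c \<le> \<bar>b i\<bar> * norm (y i)" using assms(3) by (intro mult_left_mono) auto
  ultimately show ?thesis by linarith
qed

lemma S_main:
  fixes y :: "nat \<Rightarrow> 'v::real_normed_vector"
  assumes c: "0 < c" "\<And>i. c \<le> norm (y i)"
    and th: "\<And>k. 0 < \<theta> k" "\<And>k. \<theta> k \<le> 1"
    and snP: "\<And>k. sn (P k)"
    and guar: "\<And>k g h. g \<in> Kset y c k \<Longrightarrow> norm h \<le> 3 / \<theta> k \<Longrightarrow> P k h \<le> 1 \<Longrightarrow>
                 norm (g - h) \<le> (1 + \<theta> k) * norm (g + h)"
    and con: "\<And>j i. j \<le> i \<Longrightarrow> P j (y i) \<le> c * \<theta> j / 12 * (1/2)^(Suc i)"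
  shows "\<forall>b k. k \<le> n \<longrightarrow> Sx y \<theta> k n b"
proof (induction n rule: less_induct)
  case (less n)
  note IHo = less
  have inner: "\<forall>b k. k \<le> n \<longrightarrow> n - k = d \<longrightarrow> Sx y \<theta> k n b" for d
  proof (induction d rule: less_induct)
    case (less d)
    note IHi = less
    show ?case
    proof (intro allI impI)
      fix b k assume kn: "k \<le> n" and dk: "n - k = d"
      define g where "g = sp y b k"
      define h where "h = tl_sum y b k n"
      have v: "sp y b n = g + h" using sp_split[OF kn] by (simp add: g_def h_def)
      have goal: "norm (g - h) \<le> (1 + \<theta> k) * norm (g + h)"
      proof (cases "g = 0")
        case True
        have "norm (g - h) = 1 * norm (g + h)" using True by simp
        also have "\<dots> \<le> (1 + \<theta> k) * norm (g + h)" using th(1)[of k] by (intro mult_right_mono) auto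
        finally show ?thesis .
      next
        case gnz: False
        show ?thesis
        proof (cases "k = n")
          case True
          hence "h = 0" by (simp add: h_def tl_sum_def)
          hence "norm (g - h) = 1 * norm (g + h)" by simp
          also have "\<dots> \<le> (1 + \<theta> k) * norm (g + h)" using th(1)[of k] by (intro mult_right_mono) auto
          finally show ?thesis .
        next
          case False
          hence kn': "k < n" using kn by simp
          define s where "s = norm g"
          have s0: "s > 0" using gnz by (simp add: s_def)
          have headc: "\<bar>b i\<bar> * c \<le> 4 * s" if i: "i < k" for i
          proof -
            have s1: "Sx y \<theta> i k b" and s2: "Sx y \<theta> (Suc i) k b" using IHo kn' i by auto
            have "norm (sp y b i) \<le> 2 * norm (sp y b k)" by (rule PB[OF s1 th(2)]) (use i in simp)
            moreover have "norm (sp y b (Suc i)) \<le> 2 * norm (sp y b k)" by (rule PB[OF s2 th(2)]) (use i in simp)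
            ultimately have "\<bar>b i\<bar> * c \<le> 4 * norm (sp y b k)" using coef c(2) by blast
            thus ?thesis by (simp add: s_def g_def)
          qed
          show ?thesis
          proof (cases "3 / \<theta> k * s \<le> norm h")
            case True
            have t3: "3 * s \<le> \<theta> k * norm h" using True th(1)[of k] by (simp add: field_simps)
            have "norm (g - h) \<le> s + norm h" using norm_triangle_ineq4[of g h] by (simp add: s_def)
            moreover have "norm h - s \<le> norm (g + h)" using norm_triangle_ineq4[of "g+h" g] by (simp add: s_def)
            moreover have "(1 + \<theta> k) * (norm h - s) \<le> (1 + \<theta> k) * norm (g + h)"
              using calculation(2) th(1)[of k] by (intro mult_left_mono) auto
            moreover have "\<theta> k * s \<le> 1 * s" using th(2)[of k] s0 by (intro mult_right_mono) auto
            ultimately show ?thesis using t3 by (simp add: algebra_simps)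
          next
            case False
            hence hs: "norm h < 3 / \<theta> k * s" by simp
            define b' where "b' = (\<lambda>i. if k \<le> i then b i else 0)"
            have hb': "sp y b' n = h"
            proof -
              have "sp y b' n = sp y b' k + tl_sum y b' k n" using sp_split[OF kn] .
              moreover have "sp y b' k = 0" by (simp add: sp_def b'_def)
              moreover have "tl_sum y b' k n = h" by (simp add: tl_sum_def h_def b'_def)
              ultimately show ?thesis by simp
            qed
            have PBt: "norm (sp y b' j) \<le> 2 * norm h" if j: "k \<le> j" "j \<le> n" for j
            proof (cases "j = k")
              case True
              thus ?thesis by (simp add: sp_def b'_def)
            next
              case False
              hence "n - j < d" using j dk kn' by auto
              hence "Sx y \<theta> j n b'" using IHi j by blast
              thus ?thesis using PB th(2) j hb' by metis
            qed
            have tailc: "\<bar>b i\<bar> * c \<le> 4 * norm h" if i: "k \<le> i" "i < n" for i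
            proof -
              have "norm (sp y b' i) \<le> 2 * norm h" "norm (sp y b' (Suc i)) \<le> 2 * norm h"
                using PBt i by auto
              hence "\<bar>b' i\<bar> * c \<le> 4 * norm h" using coef c(2) by metis
              thus ?thesis using i by (simp add: b'_def)
            qed
            have Ph: "P k h \<le> \<theta> k * norm h / 3"
            proof -
              have "P k h \<le> (\<Sum>i\<in>{k..<n}. \<bar>b i\<bar> * P k (y i))"
                unfolding h_def tl_sum_def by (rule sn_combo[OF snP]) simp
              also have "\<dots> \<le> (\<Sum>i\<in>{k..<n}. (\<theta> k * norm h / 3) * (1/2)^Suc i)"
              proof (rule sum_mono)
                fix i assume i: "i \<in> {k..<n}"
                have "\<bar>b i\<bar> * P k (y i) \<le> \<bar>b i\<bar> * (c * \<theta> k / 12 * (1/2)^(Suc i))"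
                  using con[of k i] i by (intro mult_left_mono) auto
                also have "\<dots> = (\<bar>b i\<bar> * c) * (\<theta> k / 12 * (1/2)^(Suc i))" by simp
                also have "\<dots> \<le> (4 * norm h) * (\<theta> k / 12 * (1/2)^(Suc i))"
                  using tailc[of i] i th(1)[of k] by (intro mult_right_mono) auto
                finally show "\<bar>b i\<bar> * P k (y i) \<le> (\<theta> k * norm h / 3) * (1/2)^Suc i" by (simp add: mult_ac)
              qed
              also have "\<dots> = (\<theta> k * norm h / 3) * (\<Sum>i\<in>{k..<n}. (1/2)^Suc i)"
                by (simp add: sum_distrib_left)
              also have "\<dots> \<le> (\<theta> k * norm h / 3) * 1"
                using geo_le1'[of k n] th(1)[of k] by (intro mult_left_mono) auto
              finally show ?thesis by simp
            qed
            have Ph': "P k ((1/s) *\<^sub>R h) \<le> 1"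
            proof -
              have "P k ((1/s) *\<^sub>R h) \<le> (1/s) * P k h" using sn_scale[OF snP] s0 by (metis abs_of_pos zero_less_divide_1_iff)
              also have "\<dots> \<le> (1/s) * (\<theta> k * norm h / 3)" using Ph s0 by (intro mult_left_mono) auto
              also have "\<dots> \<le> 1"
              proof -
                have "\<theta> k * norm h < \<theta> k * (3 / \<theta> k * s)" using hs th(1)[of k] by (intro mult_strict_left_mono) auto
                hence "\<theta> k * norm h < 3 * s" using th(1)[of k] by simp
                thus ?thesis using s0 by (simp add: field_simps)
              qed
              finally show ?thesis .
            qed
            have nh': "norm ((1/s) *\<^sub>R h) \<le> 3 / \<theta> k"
              using hs s0 by (simp add: field_simps)
            have g0K: "(1/s) *\<^sub>R g \<in> Kset y c k"
            proof -
              have "(1/s) *\<^sub>R g = (\<Sum>i<k. (b i / s) *\<^sub>R y i)"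
                by (simp add: g_def sp_def scaleR_sum_right)
              moreover have "\<forall>i<k. \<bar>b i / s\<bar> \<le> 4/c"
              proof (intro allI impI)
                fix i assume "i < k"
                hence "\<bar>b i\<bar> * c \<le> 4 * s" by (rule headc)
                thus "\<bar>b i / s\<bar> \<le> 4/c" using s0 c(1) by (simp add: field_simps abs_divide)
              qed
              moreover have "norm ((1/s) *\<^sub>R g) = 1" using s0 by (simp add: s_def)
              ultimately show ?thesis unfolding Kset_def
                by (intro IntI CollectI exI[of _ "\<lambda>i. b i / s"]) auto
            qed
            have "norm ((1/s) *\<^sub>R g - (1/s) *\<^sub>R h) \<le> (1 + \<theta> k) * norm ((1/s) *\<^sub>R g + (1/s) *\<^sub>R h)"
              by (rule guar[OF g0K nh' Ph'])
            hence "(1/s) * norm (g - h) \<le> (1/s) * ((1 + \<theta> k) * norm (g + h))"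
              using s0 by (simp add: scaleR_diff_right[symmetric] scaleR_add_right[symmetric])
            thus ?thesis using s0 by (simp add: divide_le_cancel)
          qed
        qed
      qed
      show "Sx y \<theta> k n b" using goal v by (simp add: Sx_def g_def h_def)
    qed
  qed
  show ?case using inner by blast
qed

lemma uncond_from_S:
  fixes y :: "nat \<Rightarrow> 'v::real_normed_vector"
  assumes S: "\<And>k n b. k \<le> n \<Longrightarrow> Sx y \<theta> k n b"
    and th0: "\<And>k. 0 \<le> \<theta> k"
    and E0: "1 \<le> E 0" and Es: "\<And>m. (1 + \<theta> (Suc m)) * E m \<le> E (Suc m)"
    and EC: "\<And>m. E m \<le> C"
    and eps: "\<forall>j. \<epsilon> j \<in> {-1, 1::real}"
  shows "norm (\<Sum>j<n. (\<epsilon> j * a j) *\<^sub>R y j) \<le> C * norm (\<Sum>j<n. a j *\<^sub>R y j)"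
proof -
  define N where "N = norm (\<Sum>j<n. a j *\<^sub>R y j)"
  define F where "F m = (\<Sum>j<n. (\<epsilon> (min j m) * a j) *\<^sub>R y j)" for m
  have Eg0: "0 \<le> E m" for m
  proof (induction m)
    case 0 then show ?case using E0 by simp
  next
    case (Suc m)
    have "0 \<le> (1 + \<theta> (Suc m)) * E m" using Suc th0[of "Suc m"] by simp
    then show ?case using Es[of m] by linarith
  qed
  have absE: "\<bar>\<epsilon> j\<bar> = 1" for j using eps[rule_format, of j] by auto
  have bound: "norm (F m) \<le> E m * N" for m
  proof (induction m)
    case 0
    have "F 0 = \<epsilon> 0 *\<^sub>R (\<Sum>j<n. a j *\<^sub>R y j)" by (simp add: F_def scaleR_sum_right)
    hence "norm (F 0) = N" using absE[of 0] by (simp add: N_def)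
    moreover have "1 * N \<le> E 0 * N" using E0 by (intro mult_right_mono) (auto simp: N_def)
    ultimately show ?case by simp
  next
    case (Suc m)
    have step: "norm (F (Suc m)) \<le> (1 + \<theta> (Suc m)) * norm (F m)"
    proof (cases "Suc m \<le> n \<and> \<epsilon> (Suc m) \<noteq> \<epsilon> m")
      case True
      hence sm: "\<epsilon> (Suc m) = - \<epsilon> m" using eps[rule_format, of "Suc m"] eps[rule_format, of m] by auto
      define b where "b j = \<epsilon> (min j m) * a j" for j
      have Fm: "F m = sp y b (Suc m) + tl_sum y b (Suc m) n"
        using sp_split[of "Suc m" n y b] True by (simp add: F_def sp_def b_def)
      have "F (Suc m) = sp y b (Suc m) + (\<Sum>i\<in>{Suc m..<n}. (\<epsilon> (Suc m) * a i) *\<^sub>R y i)"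
      proof -
        have "F (Suc m) = (\<Sum>j<Suc m. (\<epsilon> (min j (Suc m)) * a j) *\<^sub>R y j) +
              (\<Sum>j\<in>{Suc m..<n}. (\<epsilon> (min j (Suc m)) * a j) *\<^sub>R y j)"
          using sp_split[of "Suc m" n y "\<lambda>j. \<epsilon> (min j (Suc m)) * a j"] True
          by (simp add: F_def sp_def tl_sum_def)
        moreover have "(\<Sum>j<Suc m. (\<epsilon> (min j (Suc m)) * a j) *\<^sub>R y j) = sp y b (Suc m)"
          unfolding sp_def b_def by (rule sum.cong) (auto simp: min_def)
        moreover have "(\<Sum>j\<in>{Suc m..<n}. (\<epsilon> (min j (Suc m)) * a j) *\<^sub>R y j) =
            (\<Sum>i\<in>{Suc m..<n}. (\<epsilon> (Suc m) * a i) *\<^sub>R y i)"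
          by (rule sum.cong) (auto simp: min_def)
        ultimately show ?thesis by simp
      qed
      also have "(\<Sum>i\<in>{Suc m..<n}. (\<epsilon> (Suc m) * a i) *\<^sub>R y i) = - tl_sum y b (Suc m) n"
        unfolding tl_sum_def b_def sm
        by (simp add: sum_negf[symmetric])
      finally have "F (Suc m) = sp y b (Suc m) - tl_sum y b (Suc m) n" by simp
      moreover have "sp y b n = F m" using Fm sp_split[of "Suc m" n y b] True by simp
      ultimately show ?thesis using S[of "Suc m" n b] True unfolding Sx_def by simp
    next
      case False
      have "F (Suc m) = F m"
      proof (cases "Suc m \<le> n")
        case True
        hence e: "\<epsilon> (Suc m) = \<epsilon> m" using False by simp
        show ?thesis unfolding F_def
          by (rule sum.cong) (auto simp: min_def e le_Suc_eq)
      next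
        case nle: False
        show ?thesis unfolding F_def
          by (rule sum.cong) (use nle in \<open>auto simp: min_def\<close>)
      qed
      thus ?thesis using th0[of "Suc m"] by (simp add: mult_le_cancel_right1)
    qed
    also have "\<dots> \<le> (1 + \<theta> (Suc m)) * (E m * N)"
      using Suc th0[of "Suc m"] by (intro mult_left_mono) auto
    also have "\<dots> \<le> E (Suc m) * N"
      using Es[of m] by (simp add: N_def mult.assoc[symmetric] mult_right_mono)
    finally show ?case .
  qed
  have "F n = (\<Sum>j<n. (\<epsilon> j * a j) *\<^sub>R y j)" unfolding F_def
    by (rule sum.cong) auto
  hence "norm (\<Sum>j<n. (\<epsilon> j * a j) *\<^sub>R y j) \<le> E n * N" using bound[of n] by simp
  also have "\<dots> \<le> C * N" using EC[of n] by (simp add: N_def mult_right_mono)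
  finally show ?thesis by (simp add: N_def)
qed

lemma compact_boxsums:
  fixes y :: "nat \<Rightarrow> 'v::real_normed_vector"
  shows "compact {(\<Sum>i<k. a i *\<^sub>R y i) | a. \<forall>i<k. \<bar>a i\<bar> \<le> B}"
proof (induction k)
  case 0
  have "{(\<Sum>i<0. a i *\<^sub>R y i) | a. \<forall>i<0. \<bar>a i\<bar> \<le> B} = {0::'v}" by auto
  then show ?case by simp
next
  case (Suc k)
  define A where "A = {(\<Sum>i<k. a i *\<^sub>R y i) | a. \<forall>i<k. \<bar>a i\<bar> \<le> B}"
  define L where "L = (\<lambda>t. t *\<^sub>R y k) ` {-B..B}"
  have cL: "compact L" unfolding L_def
    by (rule compact_continuous_image) (auto intro!: continuous_intros)
  have eq: "{(\<Sum>i<Suc k. a i *\<^sub>R y i) | a. \<forall>i<Suc k. \<bar>a i\<bar> \<le> B} = {u + v | u v. u \<in> A \<and> v \<in> L}"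
  proof (intro set_eqI iffI)
    fix x assume "x \<in> {(\<Sum>i<Suc k. a i *\<^sub>R y i) | a. \<forall>i<Suc k. \<bar>a i\<bar> \<le> B}"
    then obtain a where x: "x = (\<Sum>i<Suc k. a i *\<^sub>R y i)" and a: "\<forall>i<Suc k. \<bar>a i\<bar> \<le> B" by blast
    have "(\<Sum>i<k. a i *\<^sub>R y i) \<in> A" using a unfolding A_def by auto
    moreover have "a k *\<^sub>R y k \<in> L" using a unfolding L_def
      by (intro image_eqI[of _ _ "a k"]) (auto simp: abs_le_iff)
    ultimately show "x \<in> {u + v | u v. u \<in> A \<and> v \<in> L}" using x by auto
  next
    fix x assume "x \<in> {u + v | u v. u \<in> A \<and> v \<in> L}"
    then obtain a t where x: "x = (\<Sum>i<k. a i *\<^sub>R y i) + t *\<^sub>R y k" and a: "\<forall>i<k. \<bar>a i\<bar> \<le> B"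
      and t: "t \<in> {-B..B}" unfolding A_def L_def by blast
    define a' where "a' = a(k := t)"
    have "(\<Sum>i<k. a' i *\<^sub>R y i) = (\<Sum>i<k. a i *\<^sub>R y i)" unfolding a'_def by (rule sum.cong) auto
    hence "x = (\<Sum>i<Suc k. a' i *\<^sub>R y i)" using x by (simp add: a'_def)
    moreover have "\<forall>i<Suc k. \<bar>a' i\<bar> \<le> B" using a t by (auto simp: a'_def less_Suc_eq abs_le_iff)
    ultimately show "x \<in> {(\<Sum>i<Suc k. a i *\<^sub>R y i) | a. \<forall>i<Suc k. \<bar>a i\<bar> \<le> B}" by blast
  qed
  show ?case unfolding eq by (rule compact_sums) (use Suc cL in \<open>auto simp: A_def\<close>)
qed

lemma compact_Kset: "compact (Kset y c k)"
  unfolding Kset_def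
  by (rule compact_Int_closed[OF compact_boxsums]) (auto intro!: closed_Collect_eq continuous_intros)

lemma Kset_norm: "g \<in> Kset y c k \<Longrightarrow> norm g = 1" by (simp add: Kset_def)

lemma Kset_cong: "(\<And>i. i < k \<Longrightarrow> y i = y' i) \<Longrightarrow> Kset y c k = Kset y' c k"
proof -
  assume e: "\<And>i. i < k \<Longrightarrow> y i = y' i"
  have "(\<Sum>i<k. a i *\<^sub>R y i) = (\<Sum>i<k. a i *\<^sub>R y' i)" for a by (rule sum.cong) (auto simp: e)
  thus ?thesis unfolding Kset_def by simp
qed

definition Pof :: "real \<Rightarrow> (nat \<Rightarrow> 'v::real_normed_vector) \<Rightarrow> 'v set \<Rightarrow> ('v \<Rightarrow> real)" where
  "Pof t z K = (SOME P. sn P \<and> (\<lambda>m. P (z m)) \<longlonglongrightarrow> 0 \<and>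
     (\<forall>g\<in>K. \<forall>h. norm h \<le> 3 / t \<longrightarrow> P h \<le> 1 \<longrightarrow> norm (g - h) \<le> (1 + t) * norm (g + h)))"

lemma Pof_spec:
  assumes "HYP z" "compact K" "\<And>g. g \<in> K \<Longrightarrow> norm g = 1" "0 < t" "t \<le> 1"
  shows "sn (Pof t z K) \<and> (\<lambda>m. Pof t z K (z m)) \<longlonglongrightarrow> 0 \<and>
     (\<forall>g\<in>K. \<forall>h. norm h \<le> 3 / t \<longrightarrow> Pof t z K h \<le> 1 \<longrightarrow> norm (g - h) \<le> (1 + t) * norm (g + h))"
proof -
  have "\<exists>P. sn P \<and> (\<lambda>m. P (z m)) \<longlonglongrightarrow> 0 \<and>
     (\<forall>g\<in>K. \<forall>h. norm h \<le> 3 / t \<longrightarrow> P h \<le> 1 \<longrightarrow> norm (g - h) \<le> (1 + t) * norm (g + h))"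
    by (rule guarantee[OF assms])
  thus ?thesis unfolding Pof_def by (rule someI_ex)
qed

lemma abstract_main:
  fixes z :: "nat \<Rightarrow> 'v::real_normed_vector"
  assumes H: "HYP z" and c: "0 < c" "\<And>n. c \<le> norm (z n)" and dl: "0 < \<delta>" "\<delta> \<le> 1"
  shows "\<exists>r. strict_mono r \<and> unconditional_basic (1 + \<delta>) (z \<circ> r)"
proof -
  define D where "D k = 1 + \<delta> * (1 - (1/2::real)^k)" for k
  define \<theta> where "\<theta> k = D (Suc k) / D k - 1" for k
  have D1: "1 \<le> D k" for k
  proof -
    have "(1/2::real)^k \<le> 1" by (simp add: power_le_one)
    thus ?thesis using dl by (simp add: D_def)
  qed
  have Dle: "D k \<le> 1 + \<delta>" for k using dl by (simp add: D_def)
  have Ddiff: "D (Suc k) - D k = \<delta> * (1/2)^k / 2" for k by (simp add: D_def algebra_simps)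
  have th_eq: "\<theta> k = (D (Suc k) - D k) / D k" for k
    using D1[of k] by (simp add: \<theta>_def field_simps)
  have th_pos: "0 < \<theta> k" for k using D1[of k] dl unfolding th_eq Ddiff by simp
  have th_le: "\<theta> k \<le> 1" for k
  proof -
    have "0 \<le> D (Suc k) - D k" unfolding Ddiff using dl by simp
    hence "(D (Suc k) - D k) / D k \<le> (D (Suc k) - D k) / 1"
      using D1[of k] by (intro divide_left_mono) auto
    also have "\<dots> \<le> 1"
    proof -
      have "(1/2::real)^k \<le> 1" by (simp add: power_le_one)
      hence "\<delta> * (1/2)^k \<le> 1 * 1" using dl by (intro mult_mono) auto
      thus ?thesis unfolding Ddiff by simp
    qed
    finally show ?thesis unfolding th_eq .
  qed
  define PP where "PP f j = Pof (\<theta> j) z (Kset (z \<circ> f) c j)" for f :: "nat \<Rightarrow> nat" and j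
  have PPspec: "sn (PP f j) \<and> (\<lambda>m. PP f j (z m)) \<longlonglongrightarrow> 0 \<and>
     (\<forall>g\<in>Kset (z \<circ> f) c j. \<forall>h. norm h \<le> 3 / \<theta> j \<longrightarrow> PP f j h \<le> 1 \<longrightarrow>
        norm (g - h) \<le> (1 + \<theta> j) * norm (g + h))" for f j
    unfolding PP_def by (rule Pof_spec[OF H compact_Kset Kset_norm th_pos th_le])
  define bnd where "bnd j k = c * \<theta> j / 12 * (1/2::real)^Suc k" for j k
  have bnd_pos: "0 < bnd j k" for j k using c th_pos[of j] by (simp add: bnd_def)
  define good where "good k f m \<longleftrightarrow> (\<forall>j<k. f j < m) \<and> (\<forall>j\<le>k. PP f j (z m) \<le> bnd j k)" for k f m
  have good_ex: "\<exists>m. good k f m" for k f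
  proof -
    have e1: "eventually (\<lambda>m. \<forall>j\<in>{..<k}. f j < m) sequentially"
      by (rule eventually_ball_finite) (auto intro: eventually_gt_at_top)
    have e2: "eventually (\<lambda>m. \<forall>j\<in>{..k}. PP f j (z m) \<le> bnd j k) sequentially"
    proof (rule eventually_ball_finite)
      show "finite {..k}" by simp
      show "\<forall>j\<in>{..k}. eventually (\<lambda>m. PP f j (z m) \<le> bnd j k) sequentially"
      proof
        fix j
        have "eventually (\<lambda>m. dist (PP f j (z m)) 0 < bnd j k) sequentially"
          using PPspec[of f j] bnd_pos[of j k] unfolding tendsto_iff by blast
        thus "eventually (\<lambda>m. PP f j (z m) \<le> bnd j k) sequentially"
          by (rule eventually_mono) auto
      qed
    qed
    obtain m where "\<forall>j\<in>{..<k}. f j < m" "\<forall>j\<in>{..k}. PP f j (z m) \<le> bnd j k"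
      using eventually_happens'[OF _ eventually_conj[OF e1 e2]] by auto
    thus ?thesis unfolding good_def by auto
  qed
  define nxt where "nxt k f = (LEAST m. good k f m)" for k f
  have nxt_good: "good k f (nxt k f)" for k f
    unfolding nxt_def using good_ex[of k f] by (rule LeastI_ex)
  define R where "R = rec_nat (\<lambda>_. 0::nat) (\<lambda>k Rk. Rk(k := nxt k Rk))"
  have R0: "R 0 = (\<lambda>_. 0)" and RS: "R (Suc k) = (R k)(k := nxt k (R k))" for k
    by (simp_all add: R_def)
  define r where "r k = R (Suc k) k" for k
  have Rr: "R m j = r j" if "j < m" for m j
    using that
  proof (induction m)
    case 0 then show ?case by simp
  next
    case (Suc m)
    then show ?case by (cases "j = m") (auto simp: RS r_def)
  qed
  have r_nxt: "r k = nxt k (R k)" for k by (simp add: r_def RS)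
  have PPeq: "PP (R k) j = PP r j" if "j \<le> k" for k j
  proof -
    have "Kset (z \<circ> R k) c j = Kset (z \<circ> r) c j"
      by (rule Kset_cong) (use that Rr in auto)
    thus ?thesis by (simp add: PP_def)
  qed
  have rgood: "(\<forall>j<k. r j < r k) \<and> (\<forall>j\<le>k. PP r j (z (r k)) \<le> bnd j k)" for k
    using nxt_good[of k "R k"] unfolding good_def r_nxt[symmetric]
    using Rr[of _ k] PPeq[of _ k] by auto
  have smono: "strict_mono r" unfolding strict_mono_def using rgood by blast
  define y where "y = z \<circ> r"
  have S: "\<forall>b k. k \<le> n \<longrightarrow> Sx y \<theta> k n b" for n
  proof (rule S_main[of c y \<theta> "PP r"])
    show "0 < c" using c by simp
    show "c \<le> norm (y i)" for i using c by (simp add: y_def)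
    show "0 < \<theta> k" "\<theta> k \<le> 1" for k using th_pos th_le by auto
    show "sn (PP r k)" for k using PPspec by blast
    show "norm (g - h) \<le> (1 + \<theta> k) * norm (g + h)"
      if "g \<in> Kset y c k" "norm h \<le> 3 / \<theta> k" "PP r k h \<le> 1" for k g h
      using PPspec[of r k] that by (simp add: y_def)
    show "PP r j (y i) \<le> c * \<theta> j / 12 * (1 / 2) ^ Suc i" if "j \<le> i" for j i
      using rgood[of i] that by (simp add: y_def bnd_def)
  qed
  have ub: "unconditional_basic (1 + \<delta>) y"
    unfolding unconditional_basic_def
  proof (intro conjI allI impI)
    show "y n \<noteq> 0" for n using c(2)[of "r n"] c(1) by (auto simp: y_def)
    fix n and a \<epsilon> :: "nat \<Rightarrow> real"
    assume eps: "\<forall>j. \<epsilon> j \<in> {-1, 1}"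
    show "norm (\<Sum>j<n. (\<epsilon> j * a j) *\<^sub>R y j) \<le> (1 + \<delta>) * norm (\<Sum>j<n. a j *\<^sub>R y j)"
    proof (rule uncond_from_S[where \<theta> = \<theta> and E = "\<lambda>m. D (Suc m)"])
      show "Sx y \<theta> k n b" if "k \<le> n" for k n b using S that by blast
      show "0 \<le> \<theta> k" for k using th_pos[of k] by simp
      show "1 \<le> D (Suc 0)" using D1 by blast
      show "(1 + \<theta> (Suc m)) * D (Suc m) \<le> D (Suc (Suc m))" for m
        using D1[of "Suc m"] by (simp add: \<theta>_def)
      show "D (Suc m) \<le> 1 + \<delta>" for m using Dle by blast
      show "\<forall>j. \<epsilon> j \<in> {- 1, 1}" using eps .
    qed
  qed
  show ?thesis using smono ub by (auto simp: y_def)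
qed

lemma HYP_subseq:
  fixes z :: "nat \<Rightarrow> 'v::real_normed_vector"
  assumes H: "HYP z" and s: "strict_mono s"
  shows "HYP (z \<circ> s)"
  unfolding HYP_def
proof (intro allI impI)
  fix \<theta> :: real and M :: real and g :: 'v
  assume th: "0 < \<theta>" and g: "norm g = 1"
  obtain p where p: "sn p" "(\<lambda>m. p (z m)) \<longlonglongrightarrow> 0"
    "\<forall>h. norm h \<le> M \<longrightarrow> p h \<le> 1 \<longrightarrow> (\<exists>h0. norm (h - h0) \<le> \<theta> \<and> norm (g - h0) \<le> (1 + \<theta>) * norm (g + h0))"
    using H[unfolded HYP_def, rule_format, OF th g, of M] by (elim exE conjE) simp
  have "(\<lambda>m. p ((z \<circ> s) m)) \<longlonglongrightarrow> 0"
    using LIMSEQ_subseq_LIMSEQ[OF p(2) s] by (simp add: comp_def)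
  thus "\<exists>p. sn p \<and> (\<lambda>m. p ((z \<circ> s) m)) \<longlonglongrightarrow> 0 \<and>
      (\<forall>h. norm h \<le> M \<longrightarrow> p h \<le> 1 \<longrightarrow> (\<exists>h0. norm (h - h0) \<le> \<theta> \<and> norm (g - h0) \<le> (1 + \<theta>) * norm (g + h0)))"
    using p by blast
qed

lemma unc_mono: "unconditional_basic C y \<Longrightarrow> C \<le> C' \<Longrightarrow> unconditional_basic C' y"
proof -
  assume u: "unconditional_basic C y" and cc: "C \<le> C'"
  have "norm (\<Sum>j<n. (\<epsilon> j * a j) *\<^sub>R y j) \<le> C' * norm (\<Sum>j<n. a j *\<^sub>R y j)"
    if "\<forall>j. \<epsilon> j \<in> {-1, 1}" for n a \<epsilon>
  proof -
    have "norm (\<Sum>j<n. (\<epsilon> j * a j) *\<^sub>R y j) \<le> C * norm (\<Sum>j<n. a j *\<^sub>R y j)"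
      using u that unfolding unconditional_basic_def by blast
    also have "\<dots> \<le> C' * norm (\<Sum>j<n. a j *\<^sub>R y j)" using cc by (intro mult_right_mono) auto
    finally show ?thesis .
  qed
  thus ?thesis using u unfolding unconditional_basic_def by blast
qed

lemma abstract_final:
  fixes z :: "nat \<Rightarrow> 'v::real_normed_vector"
  assumes H: "HYP z" and nz: "\<not> (z \<longlonglongrightarrow> 0)"
  shows "\<forall>\<delta>>0. \<exists>r. strict_mono r \<and> unconditional_basic (1 + \<delta>) (z \<circ> r)"
proof (intro allI impI)
  fix \<delta> :: real assume d: "0 < \<delta>"
  obtain c where c: "0 < c" "\<forall>N. \<exists>n\<ge>N. c \<le> norm (z n)"
  proof -
    from nz obtain c where c0: "c > 0" and cc: "\<not> (\<exists>no. \<forall>n\<ge>no. norm (z n - 0) < c)"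
      unfolding LIMSEQ_iff by blast
    have "\<forall>N. \<exists>n\<ge>N. c \<le> norm (z n)"
    proof
      fix N
      from cc have "\<not> (\<forall>n\<ge>N. norm (z n - 0) < c)" by blast
      then obtain n where "n \<ge> N" "\<not> norm (z n - 0) < c" by blast
      thus "\<exists>n\<ge>N. c \<le> norm (z n)" by (intro exI[of _ n]) auto
    qed
    thus ?thesis using that c0 by blast
  qed
  have "infinite {n. c \<le> norm (z n)}"
    unfolding infinite_nat_iff_unbounded_le using c(2) by simp
  then obtain s :: "nat \<Rightarrow> nat" where s: "strict_mono s" "\<forall>n. s n \<in> {n. c \<le> norm (z n)}"
    using infinite_enumerate by blast
  have H': "HYP (z \<circ> s)" by (rule HYP_subseq[OF H s(1)])
  have cs: "c \<le> norm ((z \<circ> s) n)" for n using s(2) by simp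
  have dd: "0 < min \<delta> 1" "min \<delta> 1 \<le> (1::real)" using d by auto
  obtain r where r: "strict_mono r" "unconditional_basic (1 + min \<delta> 1) ((z \<circ> s) \<circ> r)"
    using abstract_main[OF H' c(1) cs dd] by blast
  have "strict_mono (s \<circ> r)" using s(1) r(1) by (rule strict_mono_o)
  moreover have "unconditional_basic (1 + \<delta>) (z \<circ> (s \<circ> r))"
    using unc_mono[OF r(2), of "1 + \<delta>"] by (simp add: comp_assoc)
  ultimately show "\<exists>r. strict_mono r \<and> unconditional_basic (1 + \<delta>) (z \<circ> r)" by blast
qed

lemma minor_gap:
  fixes a b \<theta> :: real
  assumes "0 \<le> a" "2 \<le> a + b" "(1 + \<theta>) * a < b" "0 < \<theta>"
  shows "min (\<theta>/2) 1 \<le> b - a"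
proof (cases "a \<ge> 1/2")
  case True
  have "\<theta> * (1/2) \<le> \<theta> * a" using True assms by (intro mult_left_mono) auto
  moreover have "min (\<theta>/2) 1 \<le> \<theta>/2" by simp
  moreover have "(1 + \<theta>) * a = a + \<theta> * a" by (simp add: algebra_simps)
  ultimately show ?thesis using assms by linarith
next
  case False
  have "min (\<theta>/2) 1 \<le> 1" by simp
  moreover have "\<theta> * a \<ge> 0" using assms by simp
  ultimately show ?thesis using assms False by (simp add: algebra_simps)
qed

lemma HYP_star:
  fixes xs :: "nat \<Rightarrow> ('b::real_normed_vector \<Rightarrow>\<^sub>L real)"
  assumes sep: "separable_type TYPE('b)" and au: "property_au_star TYPE('b)"
    and wn: "weak_star_null xs"
  shows "HYP xs"
  unfolding HYP_def
proof (intro allI impI)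
  fix \<theta> :: real and M :: real and g :: "'b \<Rightarrow>\<^sub>L real"
  assume th: "0 < \<theta>" and g: "norm g = 1"
  obtain D :: "'b set" where D: "countable D" "closure D = UNIV"
    using sep unfolding separable_type_def by blast
  have Dne: "D \<noteq> {}" using D(2) by auto
  define d where "d = from_nat_into D"
  have dD: "d i \<in> D" for i using from_nat_into[OF Dne] by (simp add: d_def)
  have rD: "range d = D" using Dne D(1) by (simp add: d_def)
  define p where "p n h = real n * (\<Sum>i<n. \<bar>blinfun_apply h (d i)\<bar>)" for n and h :: "'b \<Rightarrow>\<^sub>L real"
  have snp: "sn (p n)" for n
    unfolding sn_def p_def
  proof (intro conjI allI)
    fix u v :: "'b \<Rightarrow>\<^sub>L real"
    show "0 \<le> real n * (\<Sum>i<n. \<bar>blinfun_apply u (d i)\<bar>)" by (simp add: sum_nonneg)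
    have "(\<Sum>i<n. \<bar>blinfun_apply (u + v) (d i)\<bar>) \<le> (\<Sum>i<n. \<bar>blinfun_apply u (d i)\<bar>) + (\<Sum>i<n. \<bar>blinfun_apply v (d i)\<bar>)"
      unfolding sum.distrib[symmetric] by (rule sum_mono) (simp add: abs_triangle_ineq plus_blinfun.rep_eq)
    thus "real n * (\<Sum>i<n. \<bar>blinfun_apply (u + v) (d i)\<bar>) \<le> real n * (\<Sum>i<n. \<bar>blinfun_apply u (d i)\<bar>) + real n * (\<Sum>i<n. \<bar>blinfun_apply v (d i)\<bar>)"
      by (simp add: distrib_left[symmetric] mult_left_mono)
  next
    fix t :: real and u :: "'b \<Rightarrow>\<^sub>L real"
    show "real n * (\<Sum>i<n. \<bar>blinfun_apply (t *\<^sub>R u) (d i)\<bar>) \<le> \<bar>t\<bar> * (real n * (\<Sum>i<n. \<bar>blinfun_apply u (d i)\<bar>))"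
      by (simp add: scaleR_blinfun.rep_eq abs_mult sum_distrib_left mult_ac)
  qed
  have limp: "(\<lambda>m. p n (xs m)) \<longlonglongrightarrow> 0" for n
  proof -
    have "(\<lambda>m. \<Sum>i<n. \<bar>blinfun_apply (xs m) (d i)\<bar>) \<longlonglongrightarrow> (\<Sum>i<n. \<bar>0\<bar>)"
      by (intro tendsto_intros) (use wn in \<open>auto simp: weak_star_null_def\<close>)
    hence "(\<lambda>m. real n * (\<Sum>i<n. \<bar>blinfun_apply (xs m) (d i)\<bar>)) \<longlonglongrightarrow> real n * 0"
      by (intro tendsto_intros) simp
    thus ?thesis by (simp add: p_def)
  qed
  have "\<exists>n. \<forall>h. norm h \<le> M \<longrightarrow> p n h \<le> 1 \<longrightarrow> norm (g - h) \<le> (1 + \<theta>) * norm (g + h)"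
  proof (rule ccontr)
    assume "\<not> ?thesis"
    hence "\<forall>n. \<exists>h. norm h \<le> M \<and> p n h \<le> 1 \<and> \<not> norm (g - h) \<le> (1 + \<theta>) * norm (g + h)" by blast
    from choice[OF this] obtain hs where hs0: "\<forall>n. norm (hs n) \<le> M \<and> p n (hs n) \<le> 1 \<and> \<not> norm (g - hs n) \<le> (1 + \<theta>) * norm (g + hs n)"
      by blast
    have hs: "\<And>n. norm (hs n) \<le> M" "\<And>n. p n (hs n) \<le> 1"
      "\<And>n. (1 + \<theta>) * norm (g + hs n) < norm (g - hs n)"
      using hs0 by (auto simp: not_le)
    define M' where "M' = max M 0"
    have M': "0 \<le> M'" "\<And>n. norm (hs n) \<le> M'" using hs(1) by (auto simp: M'_def le_max_iff_disj)
    have small: "\<bar>blinfun_apply (hs n) (d i)\<bar> \<le> 1 / real n" if "i < n" for n i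
    proof -
      have "\<bar>blinfun_apply (hs n) (d i)\<bar> \<le> (\<Sum>i<n. \<bar>blinfun_apply (hs n) (d i)\<bar>)"
        by (rule member_le_sum) (use that in auto)
      hence "real n * \<bar>blinfun_apply (hs n) (d i)\<bar> \<le> real n * (\<Sum>i<n. \<bar>blinfun_apply (hs n) (d i)\<bar>)"
        by (intro mult_left_mono) auto
      hence "real n * \<bar>blinfun_apply (hs n) (d i)\<bar> \<le> 1" using hs(2)[of n] by (simp add: p_def)
      thus ?thesis using that by (simp add: field_simps)
    qed
    have wsn: "weak_star_null hs"
      unfolding weak_star_null_def
    proof
      fix x :: 'b
      show "(\<lambda>n. blinfun_apply (hs n) x) \<longlonglongrightarrow> 0"
        unfolding LIMSEQ_iff
      proof (intro allI impI)
        fix e :: real assume e: "0 < e"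
        have "x \<in> closure D" using D by simp
        then obtain y where y: "y \<in> D" "dist x y < e / (2 * (M' + 1))"
          using closure_approachableD[of x D "e / (2 * (M' + 1))"] e M' by auto
        obtain i where i: "d i = y" using y rD by auto
        obtain N where N: "N > 0" "inverse (real N) < e/2"
          using ex_inverse_of_nat_less[of "e/2"] e by auto
        show "\<exists>no. \<forall>n\<ge>no. norm (blinfun_apply (hs n) x - 0) < e"
        proof (intro exI allI impI)
          fix n assume n: "max (Suc i) N \<le> n"
          have a1: "\<bar>blinfun_apply (hs n) (d i)\<bar> < e/2"
          proof -
            have iN: "i < n" "N \<le> n" using n by auto
            have "\<bar>blinfun_apply (hs n) (d i)\<bar> \<le> 1 / real n" by (rule small[OF iN(1)])
            also have "\<dots> = inverse (real n)" by (simp add: divide_inverse)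
            also have "\<dots> \<le> inverse (real N)" using iN(2) N(1) by (intro le_imp_inverse_le) auto
            finally show ?thesis using N by simp
          qed
          have a2: "\<bar>blinfun_apply (hs n) (x - d i)\<bar> < e/2"
          proof -
            have "\<bar>blinfun_apply (hs n) (x - d i)\<bar> \<le> norm (hs n) * norm (x - d i)"
              using norm_blinfun[of "hs n" "x - d i"] by simp
            also have "\<dots> \<le> M' * (e / (2 * (M' + 1)))"
              using M' y i by (intro mult_mono) (auto simp: dist_norm)
            also have "\<dots> < e/2"
            proof -
              have "M' * (e / (2 * (M' + 1))) = (e/2) * (M' / (M' + 1))" using M'(1) by (simp add: field_simps)
              also have "\<dots> < (e/2) * 1" using M'(1) e by (intro mult_strict_left_mono) auto
              finally show ?thesis by simp
            qed
            finally show ?thesis .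
          qed
          have "blinfun_apply (hs n) x = blinfun_apply (hs n) (d i) + blinfun_apply (hs n) (x - d i)"
            by (simp add: blinfun.diff_right)
          thus "norm (blinfun_apply (hs n) x - 0) < e" using a1 a2 by simp
        qed
      qed
    qed
    have conv: "(\<lambda>n. norm (g + hs n) - norm (g - hs n)) \<longlonglongrightarrow> 0"
      using au wsn unfolding property_au_star_def by blast
    have gap: "min (\<theta>/2) 1 \<le> norm (g - hs n) - norm (g + hs n)" for n
    proof (rule minor_gap[OF _ _ hs(3) th])
      show "0 \<le> norm (g + hs n)" by simp
      have "2 *\<^sub>R g = (g + hs n) + (g - hs n)" by (simp add: scaleR_2)
      hence "norm (2 *\<^sub>R g) \<le> norm (g + hs n) + norm (g - hs n)" by (metis norm_triangle_ineq)
      thus "2 \<le> norm (g + hs n) + norm (g - hs n)" using g by simp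
    qed
    obtain no where "\<forall>n\<ge>no. norm (norm (g + hs n) - norm (g - hs n) - 0) < min (\<theta>/2) 1"
    proof -
      have mpos: "0 < min (\<theta>/2) (1::real)" using th by simp
      show ?thesis using conv mpos that unfolding LIMSEQ_iff by blast
    qed
    hence "\<bar>norm (g + hs no) - norm (g - hs no)\<bar> < min (\<theta>/2) 1" by auto
    thus False using gap[of no] by linarith
  qed
  then obtain n where n: "\<forall>h. norm h \<le> M \<longrightarrow> p n h \<le> 1 \<longrightarrow> norm (g - h) \<le> (1 + \<theta>) * norm (g + h)" by blast
  show "\<exists>p. sn p \<and> (\<lambda>m. p (xs m)) \<longlonglongrightarrow> 0 \<and>
      (\<forall>h. norm h \<le> M \<longrightarrow> p h \<le> 1 \<longrightarrow> (\<exists>h0. norm (h - h0) \<le> \<theta> \<and> norm (g - h0) \<le> (1 + \<theta>) * norm (g + h0)))"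
  proof (intro exI[of _ "p n"] conjI snp limp allI impI)
    fix h assume "norm h \<le> M" "p n h \<le> 1"
    thus "\<exists>h0. norm (h - h0) \<le> \<theta> \<and> norm (g - h0) \<le> (1 + \<theta>) * norm (g + h0)"
      using n th by (intro exI[of _ h]) auto
  qed
qed

lemma infdist_lessE:
  assumes "A \<noteq> {}" "infdist x A < e"
  shows "\<exists>a\<in>A. dist x a < e"
proof -
  have "bdd_below ((\<lambda>a. dist x a) ` A)" by (rule bdd_belowI[of _ 0]) auto
  thus ?thesis using assms by (simp add: infdist_notempty cINF_less_iff)
qed

lemma infdist_geI:
  assumes "A \<noteq> {}" "\<And>a. a \<in> A \<Longrightarrow> c \<le> dist x a"
  shows "c \<le> infdist x A"
  using assms by (simp add: infdist_notempty cINF_greatest)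

lemma infdist_sub_add:
  fixes W :: "'v::real_normed_vector set"
  assumes W: "subspace W"
  shows "infdist (u + v) W \<le> infdist u W + infdist v W"
proof -
  have Wne: "W \<noteq> {}" using W subspace_0 by blast
  have "infdist (u + v) W - dist v w2 \<le> infdist u W" if w2: "w2 \<in> W" for w2
  proof (rule infdist_geI[OF Wne])
    fix w1 assume w1: "w1 \<in> W"
    have "w1 + w2 \<in> W" using W w1 w2 by (rule subspace_add)
    hence "infdist (u + v) W \<le> dist (u + v) (w1 + w2)" by (rule infdist_le)
    also have "\<dots> \<le> dist u w1 + dist v w2"
      unfolding dist_norm
      using norm_triangle_ineq[of "u - w1" "v - w2"] by (simp add: algebra_simps)
    finally show "infdist (u + v) W - dist v w2 \<le> dist u w1" by simp
  qed
  hence "infdist (u + v) W - infdist u W \<le> dist v w2" if "w2 \<in> W" for w2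
    using that by force
  hence "infdist (u + v) W - infdist u W \<le> infdist v W" by (intro infdist_geI[OF Wne])
  thus ?thesis by simp
qed

lemma infdist_sub_scale:
  fixes W :: "'v::real_normed_vector set"
  assumes W: "subspace W"
  shows "infdist (t *\<^sub>R u) W \<le> \<bar>t\<bar> * infdist u W"
proof (cases "t = 0")
  case True
  have "0 \<in> W" using W by (rule subspace_0)
  thus ?thesis using True by simp
next
  case False
  have Wne: "W \<noteq> {}" using W subspace_0 by blast
  have "infdist (t *\<^sub>R u) W / \<bar>t\<bar> \<le> infdist u W"
  proof (rule infdist_geI[OF Wne])
    fix w assume w: "w \<in> W"
    have "t *\<^sub>R w \<in> W" using W w by (rule subspace_scale)
    hence "infdist (t *\<^sub>R u) W \<le> dist (t *\<^sub>R u) (t *\<^sub>R w)" by (rule infdist_le)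
    also have "\<dots> = \<bar>t\<bar> * dist u w"
      unfolding dist_norm by (simp add: scaleR_diff_right[symmetric])
    finally show "infdist (t *\<^sub>R u) W / \<bar>t\<bar> \<le> dist u w" using False by (simp add: field_simps)
  qed
  thus ?thesis using False by (simp add: field_simps)
qed

lemma sn_infdist:
  fixes W :: "'v::real_normed_vector set"
  assumes "subspace W" "0 \<le> k"
  shows "sn (\<lambda>h. k * infdist h W)"
  unfolding sn_def
proof (intro conjI allI)
  fix u v :: 'v and t :: real
  show "0 \<le> k * infdist u W" using assms by (simp add: infdist_nonneg)
  show "k * infdist (u + v) W \<le> k * infdist u W + k * infdist v W"
    using infdist_sub_add[OF assms(1), of u v] assms(2) by (simp add: distrib_left[symmetric] mult_left_mono)
  have "k * infdist (t *\<^sub>R u) W \<le> k * (\<bar>t\<bar> * infdist u W)"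
    using infdist_sub_scale[OF assms(1)] assms(2) by (intro mult_left_mono) auto
  thus "k * infdist (t *\<^sub>R u) W \<le> \<bar>t\<bar> * (k * infdist u W)" by (simp add: mult_ac)
qed

lemma coord_bound:
  fixes S :: "'v::real_normed_vector set"
  assumes S: "closed S" "subspace S" and f: "f \<notin> S"
  shows "0 < infdist f S" "\<And>s t. s \<in> S \<Longrightarrow> \<bar>t\<bar> * infdist f S \<le> norm (s + t *\<^sub>R f)"
proof -
  have Sne: "S \<noteq> {}" using S subspace_0 by blast
  have "infdist f S \<noteq> 0" using in_closure_iff_infdist_zero[OF Sne, of f] S f by (simp add: closure_closed)
  thus "0 < infdist f S" using infdist_nonneg[of f S] by simp
  fix s t assume s: "s \<in> S"
  show "\<bar>t\<bar> * infdist f S \<le> norm (s + t *\<^sub>R f)"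
  proof (cases "t = 0")
    case True thus ?thesis by simp
  next
    case False
    have "- (1/t) *\<^sub>R s \<in> S" using S(2) s by (simp add: subspace_neg subspace_scale)
    hence "infdist f S \<le> dist f (- (1/t) *\<^sub>R s)" by (rule infdist_le)
    also have "\<dots> = norm (f + (1/t) *\<^sub>R s)" by (simp add: dist_norm)
    finally have "\<bar>t\<bar> * infdist f S \<le> \<bar>t\<bar> * norm (f + (1/t) *\<^sub>R s)" by (intro mult_left_mono) auto
    also have "\<dots> = norm (t *\<^sub>R (f + (1/t) *\<^sub>R s))" by simp
    also have "t *\<^sub>R (f + (1/t) *\<^sub>R s) = s + t *\<^sub>R f" using False by (simp add: algebra_simps)
    finally show ?thesis .
  qed
qed

lemma closed_span_insert:
  fixes S :: "'v::real_normed_vector set"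
  assumes S: "closed S" "subspace S"
  shows "closed (span (insert f S))"
proof (cases "f \<in> S")
  case True
  have "span (insert f S) = span S" by (rule span_redundant) (rule span_base[OF True])
  moreover have "span S = S" using S(2) by simp
  ultimately show ?thesis using S by simp
next
  case False
  define d where "d = infdist f S"
  have d0: "0 < d" and B: "\<And>s t. s \<in> S \<Longrightarrow> \<bar>t\<bar> * d \<le> norm (s + t *\<^sub>R f)"
    using coord_bound[OF S False] by (auto simp: d_def)
  have spS: "span S = S" using S by simp
  show ?thesis
    unfolding closed_sequential_limits
  proof (intro allI impI)
    fix u :: "nat \<Rightarrow> 'v" and l assume ul: "(\<forall>n. u n \<in> span (insert f S)) \<and> u \<longlonglongrightarrow> l"
    hence "\<forall>n. \<exists>k. u n - k *\<^sub>R f \<in> S" by (simp add: span_insert spS)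
    then obtain t where t: "\<And>n. u n - t n *\<^sub>R f \<in> S" by metis
    have "Cauchy u" using ul LIMSEQ_imp_Cauchy by blast
    have "Cauchy t"
    proof (rule CauchyI)
      fix e :: real assume e: "0 < e"
      obtain M where M: "\<forall>m\<ge>M. \<forall>n\<ge>M. norm (u m - u n) < e * d"
        using CauchyD[OF \<open>Cauchy u\<close>, of "e * d"] e d0 by auto
      show "\<exists>M. \<forall>m\<ge>M. \<forall>n\<ge>M. norm (t m - t n) < e"
      proof (intro exI allI impI)
        fix m n assume mn: "M \<le> m" "M \<le> n"
        have sS: "(u m - t m *\<^sub>R f) - (u n - t n *\<^sub>R f) \<in> S" by (rule subspace_diff[OF S(2) t t])
        have "\<bar>t m - t n\<bar> * d \<le> norm (((u m - t m *\<^sub>R f) - (u n - t n *\<^sub>R f)) + (t m - t n) *\<^sub>R f)"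
          by (rule B[OF sS])
        also have "((u m - t m *\<^sub>R f) - (u n - t n *\<^sub>R f)) + (t m - t n) *\<^sub>R f = u m - u n"
          by (simp add: algebra_simps)
        finally have "\<bar>t m - t n\<bar> * d < e * d" using M mn by fastforce
        thus "norm (t m - t n) < e" using d0 by simp
      qed
    qed
    then obtain \<tau> where tau: "t \<longlonglongrightarrow> \<tau>" using Cauchy_convergent_iff convergent_def by blast
    have "(\<lambda>n. u n - t n *\<^sub>R f) \<longlonglongrightarrow> l - \<tau> *\<^sub>R f"
      using ul tau by (intro tendsto_intros) auto
    hence "l - \<tau> *\<^sub>R f \<in> S" by (rule closed_sequentially[OF S(1) t])
    thus "l \<in> span (insert f S)" by (auto simp: span_insert spS)
  qed
qed

lemma coord_functional:
  fixes S :: "'v::real_normed_vector set"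
  assumes S: "closed S" "subspace S" and f: "f \<notin> S" and U: "span (insert f S) = UNIV"
  shows "\<exists>\<psi> :: 'v \<Rightarrow>\<^sub>L real. (\<forall>s\<in>S. blinfun_apply \<psi> s = 0) \<and> blinfun_apply \<psi> f = 1"
proof -
  define d where "d = infdist f S"
  have d0: "0 < d" and B: "\<And>s t. s \<in> S \<Longrightarrow> \<bar>t\<bar> * d \<le> norm (s + t *\<^sub>R f)"
    using coord_bound[OF S f] by (auto simp: d_def)
  have spS: "span S = S" using S by simp
  have ex: "\<exists>t. x - t *\<^sub>R f \<in> S" for x
  proof -
    have "x \<in> span (insert f S)" using U by simp
    thus ?thesis by (simp add: span_insert spS)
  qed
  have uniq: "t = t'" if "x - t *\<^sub>R f \<in> S" "x - t' *\<^sub>R f \<in> S" for x t t'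
  proof (rule ccontr)
    assume ne: "t \<noteq> t'"
    have "(x - t *\<^sub>R f) - (x - t' *\<^sub>R f) \<in> S" by (rule subspace_diff[OF S(2) that])
    moreover have "(x - t *\<^sub>R f) - (x - t' *\<^sub>R f) = (t' - t) *\<^sub>R f" by (simp add: algebra_simps)
    ultimately have "(t' - t) *\<^sub>R f \<in> S" by simp
    hence "(1 / (t' - t)) *\<^sub>R ((t' - t) *\<^sub>R f) \<in> S" by (rule subspace_scale[OF S(2)])
    thus False using ne f by simp
  qed
  define \<psi> where "\<psi> x = (THE t. x - t *\<^sub>R f \<in> S)" for x
  have psi: "x - \<psi> x *\<^sub>R f \<in> S" for x
    unfolding \<psi>_def by (rule theI') (use ex uniq in blast)
  have psi_eq: "\<psi> x = t" if "x - t *\<^sub>R f \<in> S" for x t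
    using uniq[OF psi that] .
  have bl: "bounded_linear \<psi>"
  proof (rule bounded_linear_intro[where K = "1/d"])
    fix x y
    have "(x - \<psi> x *\<^sub>R f) + (y - \<psi> y *\<^sub>R f) \<in> S" by (rule subspace_add[OF S(2) psi psi])
    hence "(x + y) - (\<psi> x + \<psi> y) *\<^sub>R f \<in> S" by (simp add: algebra_simps)
    thus "\<psi> (x + y) = \<psi> x + \<psi> y" by (rule psi_eq)
  next
    fix r x
    have "r *\<^sub>R (x - \<psi> x *\<^sub>R f) \<in> S" by (rule subspace_scale[OF S(2) psi])
    hence "r *\<^sub>R x - (r * \<psi> x) *\<^sub>R f \<in> S" by (simp add: algebra_simps)
    thus "\<psi> (r *\<^sub>R x) = r *\<^sub>R \<psi> x" using psi_eq by simp
  next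
    fix x
    have "\<bar>\<psi> x\<bar> * d \<le> norm ((x - \<psi> x *\<^sub>R f) + \<psi> x *\<^sub>R f)" by (rule B[OF psi])
    hence "\<bar>\<psi> x\<bar> * d \<le> norm x" by simp
    thus "norm (\<psi> x) \<le> norm x * (1/d)" using d0 by (simp add: field_simps)
  qed
  have "\<psi> s = 0" if "s \<in> S" for s using psi_eq[of s 0] that by simp
  moreover have "\<psi> f = 1" using psi_eq[of f 1] S(2) by (simp add: subspace_0)
  ultimately show ?thesis using bounded_linear_Blinfun_apply[OF bl]
    by (intro exI[of _ "Blinfun \<psi>"]) simp
qed

lemma span_insert_span: "span (insert a (span S)) = span (insert a S)"
  by (simp add: span_insert span_span)

lemma closed_span_finite:
  fixes W :: "'v::real_normed_vector set"
  assumes F: "finite F" and W: "closed W" "subspace W"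
  shows "closed (span (W \<union> F))"
  using F
proof (induction F rule: finite_induct)
  case empty
  have "span W = W" using W(2) by (rule span_eq_iff[THEN iffD2])
  thus ?case using W by (simp del: span_eq_iff)
next
  case (insert f F)
  have "span (W \<union> insert f F) = span (insert f (span (W \<union> F)))"
    by (simp add: span_insert_span)
  moreover have "closed (span (insert f (span (W \<union> F))))"
    by (rule closed_span_insert[OF insert.IH subspace_span])
  ultimately show ?case by simp
qed

lemma codim_functionals:
  fixes F :: "'v::real_normed_vector set"
  assumes "finite F"
  shows "\<forall>W. closed W \<and> subspace W \<and> span (W \<union> F) = UNIV \<longrightarrow>
    (\<exists>\<Phi>::('v \<Rightarrow>\<^sub>L real) set. \<exists>C\<ge>0. finite \<Phi> \<and> (\<forall>x. infdist x W \<le> C * (\<Sum>\<phi>\<in>\<Phi>. \<bar>blinfun_apply \<phi> x\<bar>)))"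
  using assms
proof (induction F rule: finite_induct)
  case empty
  show ?case
  proof (intro allI impI)
    fix W :: "'v set" assume W: "closed W \<and> subspace W \<and> span (W \<union> {}) = UNIV"
    hence "span W = W" "span W = UNIV" using span_eq_iff[of W] by auto
    hence "W = UNIV" by (simp del: span_eq_iff)
    hence "\<forall>x. infdist x W \<le> 0 * (\<Sum>\<phi>\<in>{}. \<bar>blinfun_apply \<phi> x\<bar>)" by simp
    thus "\<exists>\<Phi>::('v \<Rightarrow>\<^sub>L real) set. \<exists>C\<ge>0. finite \<Phi> \<and> (\<forall>x. infdist x W \<le> C * (\<Sum>\<phi>\<in>\<Phi>. \<bar>blinfun_apply \<phi> x\<bar>))"
      by (intro exI[of _ "{}"] exI[of _ 0]) simp
  qed
next
  case (insert f F)
  show ?case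
  proof (intro allI impI)
    fix W :: "'v set" assume W: "closed W \<and> subspace W \<and> span (W \<union> insert f F) = UNIV"
    hence cW: "closed W" and sW: "subspace W" and U: "span (W \<union> insert f F) = UNIV" by auto
    define S where "S = span (W \<union> F)"
    have cS: "closed S" unfolding S_def by (rule closed_span_finite[OF insert.hyps(1) cW sW])
    have sS: "subspace S" unfolding S_def by (rule subspace_span)
    have US: "span (insert f S) = UNIV" using U by (simp add: S_def span_insert_span)
    show "\<exists>\<Phi>::('v \<Rightarrow>\<^sub>L real) set. \<exists>C\<ge>0. finite \<Phi> \<and> (\<forall>x. infdist x W \<le> C * (\<Sum>\<phi>\<in>\<Phi>. \<bar>blinfun_apply \<phi> x\<bar>))"
    proof (cases "f \<in> S")
      case True
      have "span (insert f S) = span S" by (rule span_redundant) (rule span_base[OF True])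
      hence "span (W \<union> F) = UNIV" using US by (simp add: S_def span_span)
      thus ?thesis using insert.IH[rule_format, of W] cW sW by auto
    next
      case False
      obtain \<psi> :: "'v \<Rightarrow>\<^sub>L real" where psi: "\<forall>s\<in>S. blinfun_apply \<psi> s = 0" "blinfun_apply \<psi> f = 1"
        using coord_functional[OF cS sS False US] by blast
      have psiW: "blinfun_apply \<psi> w = 0" if "w \<in> W" for w
        using psi(1) that span_superset unfolding S_def by blast
      define W1 where "W1 = span (insert f W)"
      have cW1: "closed W1" unfolding W1_def by (rule closed_span_insert[OF cW sW])
      have sW1: "subspace W1" unfolding W1_def by (rule subspace_span)
      have "W \<union> insert f F \<subseteq> W1 \<union> F" unfolding W1_def using span_superset[of "insert f W"] by blast
      hence "span (W \<union> insert f F) \<subseteq> span (W1 \<union> F)" by (rule span_mono)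
      hence U1: "span (W1 \<union> F) = UNIV" using U by blast
      obtain \<Phi>1 :: "('v \<Rightarrow>\<^sub>L real) set" and C1 where C1: "C1 \<ge> 0" "finite \<Phi>1"
        "\<forall>x. infdist x W1 \<le> C1 * (\<Sum>\<phi>\<in>\<Phi>1. \<bar>blinfun_apply \<phi> x\<bar>)"
        using insert.IH[rule_format, of W1] cW1 sW1 U1 by auto
      define K where "K = norm \<psi> * norm f"
      have K0: "0 \<le> K" by (simp add: K_def)
      have "0 \<in> W1" by (rule subspace_0[OF sW1])
      hence W1ne: "W1 \<noteq> {}" by blast
      have spW: "span W = W" using sW by (rule span_eq_iff[THEN iffD2])
      have key: "infdist x W \<le> (1 + K) * infdist x W1 + norm f * \<bar>blinfun_apply \<psi> x\<bar>" for x
      proof -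
        have "(infdist x W - norm f * \<bar>blinfun_apply \<psi> x\<bar>) / (1 + K) \<le> infdist x W1"
        proof (rule infdist_geI[OF W1ne])
          fix w1 assume w1: "w1 \<in> W1"
          then obtain t where t: "w1 - t *\<^sub>R f \<in> W" unfolding W1_def by (auto simp: span_insert spW)
          define w where "w = w1 - t *\<^sub>R f"
          have "infdist x W \<le> dist x w" using t by (intro infdist_le) (simp add: w_def)
          also have "\<dots> = norm ((x - w1) + t *\<^sub>R f)" by (simp add: dist_norm w_def algebra_simps)
          also have "\<dots> \<le> norm (x - w1) + \<bar>t\<bar> * norm f" using norm_triangle_ineq[of "x - w1" "t *\<^sub>R f"] by simp
          finally have i1: "infdist x W \<le> norm (x - w1) + \<bar>t\<bar> * norm f" .
          have "blinfun_apply \<psi> w1 = blinfun_apply \<psi> w + t * blinfun_apply \<psi> f"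
            by (simp add: w_def blinfun.diff_right blinfun.scaleR_right)
          hence pw1: "blinfun_apply \<psi> w1 = t" using psiW[of w] t psi(2) by (simp add: w_def)
          have "\<bar>t\<bar> \<le> \<bar>blinfun_apply \<psi> x\<bar> + \<bar>blinfun_apply \<psi> (w1 - x)\<bar>"
            using pw1 by (simp add: blinfun.diff_right)
          also have "\<bar>blinfun_apply \<psi> (w1 - x)\<bar> \<le> norm \<psi> * norm (x - w1)"
            using norm_blinfun[of \<psi> "w1 - x"] by (simp add: norm_minus_commute)
          finally have i2: "\<bar>t\<bar> \<le> \<bar>blinfun_apply \<psi> x\<bar> + norm \<psi> * norm (x - w1)" by simp
          have "\<bar>t\<bar> * norm f \<le> (\<bar>blinfun_apply \<psi> x\<bar> + norm \<psi> * norm (x - w1)) * norm f"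
            using i2 by (intro mult_right_mono) auto
          hence "infdist x W \<le> norm (x - w1) + norm f * \<bar>blinfun_apply \<psi> x\<bar> + K * norm (x - w1)"
            using i1 by (simp add: K_def algebra_simps)
          hence "infdist x W - norm f * \<bar>blinfun_apply \<psi> x\<bar> \<le> (1 + K) * dist x w1"
            by (simp add: dist_norm algebra_simps)
          thus "(infdist x W - norm f * \<bar>blinfun_apply \<psi> x\<bar>) / (1 + K) \<le> dist x w1"
            using K0 by (simp add: divide_le_eq mult.commute)
        qed
        thus ?thesis using K0 by (simp add: divide_le_eq mult.commute)
      qed
      define \<Phi> where "\<Phi> = insert \<psi> \<Phi>1"
      define C where "C = (1 + K) * C1 + norm f"
      have "infdist x W \<le> C * (\<Sum>\<phi>\<in>\<Phi>. \<bar>blinfun_apply \<phi> x\<bar>)" for x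
      proof -
        have s1: "(\<Sum>\<phi>\<in>\<Phi>1. \<bar>blinfun_apply \<phi> x\<bar>) \<le> (\<Sum>\<phi>\<in>\<Phi>. \<bar>blinfun_apply \<phi> x\<bar>)"
          unfolding \<Phi>_def by (rule sum_mono2) (use C1 in auto)
        have s2: "\<bar>blinfun_apply \<psi> x\<bar> \<le> (\<Sum>\<phi>\<in>\<Phi>. \<bar>blinfun_apply \<phi> x\<bar>)"
          unfolding \<Phi>_def by (rule member_le_sum) (use C1 in auto)
        have "infdist x W \<le> (1 + K) * (C1 * (\<Sum>\<phi>\<in>\<Phi>1. \<bar>blinfun_apply \<phi> x\<bar>)) + norm f * \<bar>blinfun_apply \<psi> x\<bar>"
          using key[of x] C1(3) K0 by (meson add_mono_thms_linordered_semiring(3) mult_left_mono order_trans add_nonneg_nonneg zero_le_one)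
        also have "\<dots> \<le> (1 + K) * (C1 * (\<Sum>\<phi>\<in>\<Phi>. \<bar>blinfun_apply \<phi> x\<bar>)) + norm f * (\<Sum>\<phi>\<in>\<Phi>. \<bar>blinfun_apply \<phi> x\<bar>)"
          using s1 s2 C1(1) K0 by (intro add_mono mult_left_mono) auto
        also have "\<dots> = C * (\<Sum>\<phi>\<in>\<Phi>. \<bar>blinfun_apply \<phi> x\<bar>)" by (simp add: C_def algebra_simps)
        finally show ?thesis .
      qed
      moreover have "C \<ge> 0" using C1 K0 by (simp add: C_def)
      moreover have "finite \<Phi>" using C1 by (simp add: \<Phi>_def)
      ultimately show ?thesis by blast
    qed
  qed
qed

lemma HYP_au:
  fixes x :: "nat \<Rightarrow> 'a::real_normed_vector"
  assumes au: "property_au TYPE('a)" and wn: "weakly_null x"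
  shows "HYP x"
  unfolding HYP_def
proof (intro allI impI)
  fix \<theta> :: real and M :: real and g :: 'a
  assume th: "0 < \<theta>" and g: "norm g = 1"
  obtain W :: "'a set" where W: "subspace W" "closed W" "finite_codim W"
    "\<forall>w\<in>W. norm (g - w) \<le> (1 + \<theta>) * norm (g + w)"
    using au th unfolding property_au_def by blast
  obtain F :: "'a set" where F: "finite F" "span (W \<union> F) = UNIV"
    using W(3) unfolding finite_codim_def by blast
  obtain \<Phi> :: "('a \<Rightarrow>\<^sub>L real) set" and C where C: "C \<ge> 0" "finite \<Phi>"
    "\<forall>x. infdist x W \<le> C * (\<Sum>\<phi>\<in>\<Phi>. \<bar>blinfun_apply \<phi> x\<bar>)"
    using codim_functionals[OF F(1), rule_format, of W] W F by auto
  have Wne: "W \<noteq> {}" using subspace_0[OF W(1)] by blast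
  define p where "p h = (2/\<theta>) * infdist h W" for h
  have snp: "sn p" unfolding p_def by (rule sn_infdist[OF W(1)]) (use th in simp)
  have lim: "(\<lambda>m. p (x m)) \<longlonglongrightarrow> 0"
  proof (rule Lim_null_comparison)
    show "\<forall>\<^sub>F m in sequentially. norm (p (x m)) \<le> (2/\<theta>) * (C * (\<Sum>\<phi>\<in>\<Phi>. \<bar>blinfun_apply \<phi> (x m)\<bar>))"
    proof (rule always_eventually, rule allI)
      fix m
      have "norm (p (x m)) = p (x m)" using th by (simp add: p_def infdist_nonneg)
      also have "\<dots> \<le> (2/\<theta>) * (C * (\<Sum>\<phi>\<in>\<Phi>. \<bar>blinfun_apply \<phi> (x m)\<bar>))"
        unfolding p_def using C(3) th by (intro mult_left_mono) auto
      finally show "norm (p (x m)) \<le> (2/\<theta>) * (C * (\<Sum>\<phi>\<in>\<Phi>. \<bar>blinfun_apply \<phi> (x m)\<bar>))" .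
    qed
    have "(\<lambda>m. (2/\<theta>) * (C * (\<Sum>\<phi>\<in>\<Phi>. \<bar>blinfun_apply \<phi> (x m)\<bar>))) \<longlonglongrightarrow> (2/\<theta>) * (C * (\<Sum>\<phi>\<in>\<Phi>. \<bar>0\<bar>))"
      by (intro tendsto_intros) (use wn in \<open>auto simp: weakly_null_def\<close>)
    thus "(\<lambda>m. (2/\<theta>) * (C * (\<Sum>\<phi>\<in>\<Phi>. \<bar>blinfun_apply \<phi> (x m)\<bar>))) \<longlonglongrightarrow> 0" by simp
  qed
  show "\<exists>p. sn p \<and> (\<lambda>m. p (x m)) \<longlonglongrightarrow> 0 \<and>
      (\<forall>h. norm h \<le> M \<longrightarrow> p h \<le> 1 \<longrightarrow> (\<exists>h0. norm (h - h0) \<le> \<theta> \<and> norm (g - h0) \<le> (1 + \<theta>) * norm (g + h0)))"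
  proof (intro exI[of _ p] conjI snp lim allI impI)
    fix h :: 'a assume "norm h \<le> M" "p h \<le> 1"
    hence "infdist h W \<le> \<theta>/2" using th by (simp add: p_def field_simps)
    hence "infdist h W < \<theta>" using th by simp
    then obtain w where w: "w \<in> W" "dist h w < \<theta>" using infdist_lessE[OF Wne] by blast
    show "\<exists>h0. norm (h - h0) \<le> \<theta> \<and> norm (g - h0) \<le> (1 + \<theta>) * norm (g + h0)"
      using w W(4) by (intro exI[of _ w]) (auto simp: dist_norm)
  qed
qed

theorem lemma2p5:
  fixes x :: "nat \<Rightarrow> 'a::banach"
    and xs :: "nat \<Rightarrow> ('b::banach \<Rightarrow>\<^sub>L real)"
  shows "(separable_type TYPE('a) \<and> property_au TYPE('a) \<and> weakly_null x \<and> \<not> (x \<longlonglongrightarrow> 0)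
            \<longrightarrow> (\<forall>\<delta>>0. \<exists>r. strict_mono r \<and> unconditional_basic (1 + \<delta>) (x \<circ> r)))
       \<and> (separable_type TYPE('b) \<and> property_au_star TYPE('b) \<and> weak_star_null xs \<and> \<not> (xs \<longlonglongrightarrow> 0)
            \<longrightarrow> (\<forall>\<delta>>0. \<exists>r. strict_mono r \<and> unconditional_basic (1 + \<delta>) (xs \<circ> r)))"
proof (intro conjI impI)
  assume a: "separable_type TYPE('a) \<and> property_au TYPE('a) \<and> weakly_null x \<and> \<not> (x \<longlonglongrightarrow> 0)"
  show "\<forall>\<delta>>0. \<exists>r. strict_mono r \<and> unconditional_basic (1 + \<delta>) (x \<circ> r)"
    by (rule abstract_final) (use a HYP_au in auto)
next
  assume a: "separable_type TYPE('b) \<and> property_au_star TYPE('b) \<and> weak_star_null xs \<and> \<not> (xs \<longlonglongrightarrow> 0)"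
  show "\<forall>\<delta>>0. \<exists>r. strict_mono r \<and> unconditional_basic (1 + \<delta>) (xs \<circ> r)"
    by (rule abstract_final) (use a HYP_star in auto)
qed

end
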